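(* Let $B$ be a unital $C^*$-algebra with a $*$-isomorphism $\psi:B\to M_n\otimes B$ satisfying $\psi(1)=I_n\otimes1$. Then for all $m\ge1$, $1\le i,j\le n$ and $b,c\in B$: $\chi_{mij}(\sigma_m(b)\,c)=b\,\chi_{mij}(c)$ and $\chi_{mij}(c\,\sigma_m(b))=\chi_{mij}(c)\,b$.
   Context: $M_n=M_n(\mathbb{C})$, matrix units $E_{kl}$, identity $I_n$. Define $\psi_0=\mathrm{id}_B$, $\psi_{m+1}=(\mathrm{id}^{\otimes m}\otimes\psi)\circ\psi_m:B\to M_n^{\otimes(m+1)}\otimes B$. With $f(b)=I_n\otimes b$, for $m\ge1$ let $\sigma_m=\psi_m^{-1}\circ(\mathrm{id}^{\otimes(m-1)}\otimes f)\circ\psi_{m-1}:B\to B$. Let $e_{ij}:M_n\to\mathbb{C}$ be the linear functional $e_{ij}(E_{kl})=\delta_{ik}\delta_{jl}$, and for $m\ge1$ let $\chi_{mij}=\psi_{m-1}^{-1}\circ(\mathrm{id}^{\otimes(m-1)}\otimes e_{ij}\otimes\mathrm{id}_B)\circ\psi_m:B\to B$, where $\mathrm{id}^{\otimes(m-1)}\otimes e_{ij}\otimes\mathrm{id}_B:M_n^{\otimes m}\otimes B\to M_n^{\otimes(m-1)}\otimes B$ is the slice map on the $m$-th tensor factor. *)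

theory Defs
  imports "HOL-Analysis.Analysis"
begin

class cstar_algebra = real_normed_algebra_1 + banach +
  fixes scaleC :: "complex \<Rightarrow> 'a \<Rightarrow> 'a"
    and cstar :: "'a \<Rightarrow> 'a"
  assumes scaleC_add_right: "scaleC c (x + y) = scaleC c x + scaleC c y"
    and scaleC_add_left: "scaleC (c + d) x = scaleC c x + scaleC d x"
    and scaleC_scaleC: "scaleC c (scaleC d x) = scaleC (c * d) x"
    and scaleC_one: "scaleC 1 x = x"
    and scaleR_scaleC: "scaleR r x = scaleC (complex_of_real r) x"
    and mult_scaleC_left: "scaleC c x * y = scaleC c (x * y)"
    and mult_scaleC_right: "x * scaleC c y = scaleC c (x * y)"
    and norm_scaleC: "norm (scaleC c x) = cmod c * norm x"
    and cstar_cstar: "cstar (cstar x) = x"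
    and cstar_add: "cstar (x + y) = cstar x + cstar y"
    and cstar_scaleC: "cstar (scaleC c x) = scaleC (cnj c) (cstar x)"
    and cstar_mult: "cstar (x * y) = cstar y * cstar x"
    and cstar_identity: "norm (cstar x * x) = (norm x)\<^sup>2"

text \<open>M_n \<otimes> B is identified with M_n(B): an element \<Sum> E_kl \<otimes> b_kl is the function
(k,l) \<mapsto> b_kl, indices ranging over a finite type 'n with CARD('n) = n.\<close>

definition star_iso_Mn :: "('b::cstar_algebra \<Rightarrow> ('n::finite \<Rightarrow> 'n \<Rightarrow> 'b)) \<Rightarrow> bool" where
  "star_iso_Mn psi \<longleftrightarrow>
     (\<forall>b c. psi (b + c) = (\<lambda>k l. psi b k l + psi c k l)) \<and>
     (\<forall>z b. psi (scaleC z b) = (\<lambda>k l. scaleC z (psi b k l))) \<and>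
     (\<forall>b c. psi (b * c) = (\<lambda>k l. \<Sum>r\<in>UNIV. psi b k r * psi c r l)) \<and>
     (\<forall>b. psi (cstar b) = (\<lambda>k l. cstar (psi b l k))) \<and>
     bij psi"

text \<open>An element \<Sum> E_{k1 l1} \<otimes> ... \<otimes> E_{km lm} \<otimes> b is represented as a function
of the multi-indices (ks, ls) (lists of length m), which vanishes on lists of other lengths.
The last list entry corresponds to the m-th tensor factor.\<close>

fun psi_pow :: "('b::zero \<Rightarrow> ('n \<Rightarrow> 'n \<Rightarrow> 'b)) \<Rightarrow> nat \<Rightarrow> 'b \<Rightarrow> ('n list \<Rightarrow> 'n list \<Rightarrow> 'b)" where
  "psi_pow psi 0 b = (\<lambda>ks ls. if ks = [] \<and> ls = [] then b else 0)"
| "psi_pow psi (Suc m) b = (\<lambda>ks ls.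
      if length ks = Suc m \<and> length ls = Suc m
      then psi (psi_pow psi m b (butlast ks) (butlast ls)) (last ks) (last ls)
      else 0)"

text \<open>id^{\<otimes>m} \<otimes> f with f(b) = I_n \<otimes> b : M_n^{\<otimes>m}\<otimes>B \<rightarrow> M_n^{\<otimes>(m+1)}\<otimes>B.\<close>
definition lift_id :: "nat \<Rightarrow> ('n list \<Rightarrow> 'n list \<Rightarrow> 'b::zero) \<Rightarrow> ('n list \<Rightarrow> 'n list \<Rightarrow> 'b)" where
  "lift_id m Y = (\<lambda>ks ls.
      if length ks = Suc m \<and> length ls = Suc m
      then (if last ks = last ls then Y (butlast ks) (butlast ls) else 0)
      else 0)"

text \<open>id^{\<otimes>m} \<otimes> e_ij \<otimes> id_B : M_n^{\<otimes>(m+1)}\<otimes>B \<rightarrow> M_n^{\<otimes>m}\<otimes>B (slice on the (m+1)-th factor).\<close>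
definition slice :: "nat \<Rightarrow> 'n \<Rightarrow> 'n \<Rightarrow> ('n list \<Rightarrow> 'n list \<Rightarrow> 'b::zero) \<Rightarrow> ('n list \<Rightarrow> 'n list \<Rightarrow> 'b)" where
  "slice m i j X = (\<lambda>ks ls. if length ks = m \<and> length ls = m then X (ks @ [i]) (ls @ [j]) else 0)"

definition sigma :: "('b::zero \<Rightarrow> ('n \<Rightarrow> 'n \<Rightarrow> 'b)) \<Rightarrow> nat \<Rightarrow> 'b \<Rightarrow> 'b" where
  "sigma psi m b = inv_into UNIV (psi_pow psi m) (lift_id (m - 1) (psi_pow psi (m - 1) b))"

definition chi :: "('b::zero \<Rightarrow> ('n \<Rightarrow> 'n \<Rightarrow> 'b)) \<Rightarrow> nat \<Rightarrow> 'n \<Rightarrow> 'n \<Rightarrow> 'b \<Rightarrow> 'b" where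
  "chi psi m i j c = inv_into UNIV (psi_pow psi (m - 1)) (slice (m - 1) i j (psi_pow psi m c))"

end

theory Submission
  imports Defs
begin

lemma pp_zero:
  "\<not> (length ks = m \<and> length ls = m) \<Longrightarrow> psi_pow psi m x ks ls = 0"
  by (cases m) auto

lemma psi_zero:
  assumes "star_iso_Mn psi" shows "psi 0 = (\<lambda>k l. 0)"
proof -
  have "psi (0 + 0) = (\<lambda>k l. psi 0 k l + psi 0 k l)"
    using assms unfolding star_iso_Mn_def by blast
  then show ?thesis by (auto simp: fun_eq_iff)
qed

lemma psi_sum:
  assumes "star_iso_Mn psi" and "finite A"
  shows "psi (\<Sum>a\<in>A. f a) k l = (\<Sum>a\<in>A. psi (f a) k l)"
  using assms(2)
proof (induction A rule: finite_induct)
  case empty then show ?case using psi_zero[OF assms(1)] by simp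
next
  case (insert x F)
  have "psi (f x + sum f F) = (\<lambda>k l. psi (f x) k l + psi (sum f F) k l)"
    using assms(1) unfolding star_iso_Mn_def by blast
  then show ?case using insert by simp
qed

lemma psi_mult:
  assumes "star_iso_Mn psi"
  shows "psi (b * c) k l = (\<Sum>r\<in>UNIV. psi b k r * psi c r l)"
  using assms unfolding star_iso_Mn_def by simp

lemma sum_snoc:
  "(\<Sum>rs\<in>{rs::('n::finite) list. length rs = Suc m}. f rs)
   = (\<Sum>rs\<in>{rs. length rs = m}. \<Sum>r\<in>UNIV. f (rs @ [r]))"
proof -
  have eq: "{rs::'n list. length rs = Suc m} = (\<lambda>(a,r). a @ [r]) ` ({rs. length rs = m} \<times> UNIV)"
  proof (rule set_eqI, rule iffI)
    fix x :: "'n list" assume "x \<in> {rs. length rs = Suc m}"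
    then have "x = butlast x @ [last x]" "length (butlast x) = m"
      by (auto intro: append_butlast_last_id[symmetric])
    then show "x \<in> (\<lambda>(a,r). a @ [r]) ` ({rs. length rs = m} \<times> UNIV)"
      by (metis (mono_tags, lifting) SigmaI UNIV_I case_prod_conv image_eqI mem_Collect_eq)
  qed auto
  have inj: "inj_on (\<lambda>(a,r). a @ [r]) ({rs::'n list. length rs = m} \<times> UNIV)"
    by (auto simp: inj_on_def)
  have "(\<Sum>rs\<in>{rs::'n list. length rs = Suc m}. f rs)
      = (\<Sum>p\<in>{rs. length rs = m} \<times> UNIV. f ((\<lambda>(a,r). a @ [r]) p))"
    unfolding eq by (subst sum.reindex[OF inj]) (simp add: comp_def)
  also have "\<dots> = (\<Sum>rs\<in>{rs. length rs = m}. \<Sum>r\<in>UNIV. f (rs @ [r]))"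
    by (simp add: sum.cartesian_product case_prod_beta)
  finally show ?thesis .
qed

lemma pp_mult:
  fixes psi :: "'b::cstar_algebra \<Rightarrow> ('n::finite \<Rightarrow> 'n \<Rightarrow> 'b)"
  assumes iso: "star_iso_Mn psi"
  shows "length ks = m \<Longrightarrow> length ls = m \<Longrightarrow> psi_pow psi m (b*c) ks ls
     = (\<Sum>rs\<in>{rs. length rs = m}. psi_pow psi m b ks rs * psi_pow psi m c rs ls)"
proof (induction m arbitrary: ks ls)
  case 0
  then have "{rs::'n list. length rs = 0} = {[]}" by auto
  then show ?case using 0 by simp
next
  case (Suc m)
  let ?k = "butlast ks" and ?l = "butlast ls"
  have lk: "length ?k = m" "length ?l = m" using Suc.prems by auto
  have fin: "finite {rs::'n list. length rs = m}" by (rule finite_list_length)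
  have "psi_pow psi (Suc m) (b*c) ks ls = psi (psi_pow psi m (b*c) ?k ?l) (last ks) (last ls)"
    using Suc.prems by simp
  also have "\<dots> = psi (\<Sum>rs\<in>{rs. length rs = m}. psi_pow psi m b ?k rs * psi_pow psi m c rs ?l) (last ks) (last ls)"
    using Suc.IH[OF lk] by simp
  also have "\<dots> = (\<Sum>rs\<in>{rs. length rs = m}. \<Sum>r\<in>UNIV. psi (psi_pow psi m b ?k rs) (last ks) r
        * psi (psi_pow psi m c rs ?l) r (last ls))"
    by (simp add: psi_sum[OF iso fin] psi_mult[OF iso])
  also have "\<dots> = (\<Sum>rs\<in>{rs. length rs = m}. \<Sum>r\<in>UNIV. psi_pow psi (Suc m) b ks (rs @ [r])
        * psi_pow psi (Suc m) c (rs @ [r]) ls)"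
    using Suc.prems by (intro sum.cong refl) auto
  also have "\<dots> = (\<Sum>rs\<in>{rs. length rs = Suc m}. psi_pow psi (Suc m) b ks rs * psi_pow psi (Suc m) c rs ls)"
    by (rule sum_snoc[symmetric])
  finally show ?case .
qed

lemma pp_inj:
  assumes iso: "star_iso_Mn psi"
  shows "psi_pow psi m x = psi_pow psi m y \<Longrightarrow> x = y"
proof (induction m arbitrary: x y)
  case 0
  then show ?case by (metis psi_pow.simps(1))
next
  case (Suc m)
  have injp: "inj psi" using iso unfolding star_iso_Mn_def bij_def by blast
  have "psi_pow psi m x ks ls = psi_pow psi m y ks ls" for ks ls
  proof (cases "length ks = m \<and> length ls = m")
    case True
    have "psi (psi_pow psi m x ks ls) = psi (psi_pow psi m y ks ls)"
    proof (intro ext)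
      fix k l
      have "psi_pow psi (Suc m) x (ks @ [k]) (ls @ [l]) = psi_pow psi (Suc m) y (ks @ [k]) (ls @ [l])"
        using Suc.prems by simp
      then show "psi (psi_pow psi m x ks ls) k l = psi (psi_pow psi m y ks ls) k l"
        using True by simp
    qed
    then show ?thesis using injp by (simp add: inj_eq)
  next
    case False then show ?thesis by (simp add: pp_zero)
  qed
  then show ?case using Suc.IH by blast
qed

lemma pp_surj:
  assumes iso: "star_iso_Mn psi"
  shows "(\<forall>ks ls. \<not> (length ks = m \<and> length ls = m) \<longrightarrow> Z ks ls = 0) \<Longrightarrow> \<exists>x. psi_pow psi m x = Z"
proof (induction m arbitrary: Z)
  case 0
  show ?case
    by (rule exI[of _ "Z [] []"]) (use 0 in \<open>auto simp: fun_eq_iff\<close>)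
next
  case (Suc m)
  have bj: "bij psi" using iso unfolding star_iso_Mn_def by blast
  define W where "W = (\<lambda>ks ls. if length ks = m \<and> length ls = m
     then inv psi (\<lambda>k l. Z (ks @ [k]) (ls @ [l])) else 0)"
  have "\<exists>x. psi_pow psi m x = W"
    by (rule Suc.IH) (auto simp: W_def)
  then obtain x where x: "psi_pow psi m x = W" by blast
  have "psi_pow psi (Suc m) x = Z"
  proof (intro ext)
    fix ks ls
    show "psi_pow psi (Suc m) x ks ls = Z ks ls"
    proof (cases "length ks = Suc m \<and> length ls = Suc m")
      case True
      then have ne: "ks \<noteq> []" "ls \<noteq> []" by auto
      have "psi_pow psi (Suc m) x ks ls = psi (W (butlast ks) (butlast ls)) (last ks) (last ls)"
        using True x by simp
      also have "\<dots> = Z (butlast ks @ [last ks]) (butlast ls @ [last ls])"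
        using True by (simp add: W_def bij_is_surj[OF bj] surj_f_inv_f)
      also have "\<dots> = Z ks ls" using ne by simp
      finally show ?thesis .
    next
      case False then show ?thesis using Suc.prems pp_zero[where m="Suc m"] by metis
    qed
  qed
  then show ?case by blast
qed

lemma pp_inv:
  assumes iso: "star_iso_Mn psi"
    and Z: "\<forall>ks ls. \<not> (length ks = m \<and> length ls = m) \<longrightarrow> Z ks ls = 0"
  shows "psi_pow psi m (inv_into UNIV (psi_pow psi m) Z) = Z"
proof -
  obtain x where "psi_pow psi m x = Z" using pp_surj[OF iso Z] by blast
  then show ?thesis by (metis UNIV_I f_inv_into_f image_eqI)
qed

theorem corollary3p2:
  fixes psi :: "'b::cstar_algebra \<Rightarrow> ('n::finite \<Rightarrow> 'n \<Rightarrow> 'b)"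
  assumes iso: "star_iso_Mn psi"
    and unit: "psi 1 = (\<lambda>k l. if k = l then 1 else 0)"
    and m: "m \<ge> 1"
  shows "chi psi m i j (sigma psi m b * c) = b * chi psi m i j c
       \<and> chi psi m i j (c * sigma psi m b) = chi psi m i j c * b"
proof -
  obtain p where mp: "m = Suc p" using m by (cases m) auto
  let ?P = "psi_pow psi"
  have sig: "?P (Suc p) (sigma psi m b) = lift_id p (?P p b)"
    unfolding sigma_def mp diff_Suc_1 by (rule pp_inv[OF iso]) (auto simp: lift_id_def)
  have chi: "?P p (chi psi m i j x) = slice p i j (?P (Suc p) x)" for x
    unfolding chi_def mp diff_Suc_1 by (rule pp_inv[OF iso]) (auto simp: slice_def)
  have sum1: "(\<Sum>r\<in>UNIV. (if i = r then (f r::'b) else 0) * g r) = f i * g i" for f g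
  proof -
    have "(\<Sum>r\<in>UNIV. (if i = r then (f r::'b) else 0) * g r) = (\<Sum>r\<in>UNIV. if i = r then f r * g r else 0)"
      by (rule sum.cong) auto
    then show ?thesis by simp
  qed
  have sum2: "(\<Sum>r\<in>UNIV. g r * (if r = j then (f r::'b) else 0)) = g j * f j" for f g
  proof -
    have "(\<Sum>r\<in>UNIV. g r * (if r = j then (f r::'b) else 0)) = (\<Sum>r\<in>UNIV. if r = j then g r * f r else 0)"
      by (rule sum.cong) auto
    then show ?thesis by simp
  qed
  have A: "?P p (chi psi m i j (sigma psi m b * c)) = ?P p (b * chi psi m i j c)"
  proof (intro ext)
    fix ks ls :: "'n list"
    show "?P p (chi psi m i j (sigma psi m b * c)) ks ls = ?P p (b * chi psi m i j c) ks ls"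
    proof (cases "length ks = p \<and> length ls = p")
      case True
      have "?P p (chi psi m i j (sigma psi m b * c)) ks ls = ?P (Suc p) (sigma psi m b * c) (ks @ [i]) (ls @ [j])"
        using True by (simp add: chi slice_def del: psi_pow.simps)
      also have "\<dots> = (\<Sum>rs\<in>{rs. length rs = Suc p}. ?P (Suc p) (sigma psi m b) (ks @ [i]) rs * ?P (Suc p) c rs (ls @ [j]))"
        by (rule pp_mult[OF iso]) (use True in auto)
      also have "\<dots> = (\<Sum>rs\<in>{rs. length rs = p}. \<Sum>r\<in>UNIV. lift_id p (?P p b) (ks @ [i]) (rs @ [r]) * ?P (Suc p) c (rs @ [r]) (ls @ [j]))"
        by (simp only: sum_snoc sig)
      also have "\<dots> = (\<Sum>rs\<in>{rs. length rs = p}. ?P p b ks rs * ?P p (chi psi m i j c) rs ls)"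
        using True by (intro sum.cong refl) (simp add: lift_id_def chi slice_def sum1)
      also have "\<dots> = ?P p (b * chi psi m i j c) ks ls"
        using True by (simp add: pp_mult[OF iso])
      finally show ?thesis .
    next
      case False then show ?thesis by (simp add: pp_zero)
    qed
  qed
  have B: "?P p (chi psi m i j (c * sigma psi m b)) = ?P p (chi psi m i j c * b)"
  proof (intro ext)
    fix ks ls :: "'n list"
    show "?P p (chi psi m i j (c * sigma psi m b)) ks ls = ?P p (chi psi m i j c * b) ks ls"
    proof (cases "length ks = p \<and> length ls = p")
      case True
      have "?P p (chi psi m i j (c * sigma psi m b)) ks ls = ?P (Suc p) (c * sigma psi m b) (ks @ [i]) (ls @ [j])"
        using True by (simp add: chi slice_def del: psi_pow.simps)
      also have "\<dots> = (\<Sum>rs\<in>{rs. length rs = Suc p}. ?P (Suc p) c (ks @ [i]) rs * ?P (Suc p) (sigma psi m b) rs (ls @ [j]))"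
        by (rule pp_mult[OF iso]) (use True in auto)
      also have "\<dots> = (\<Sum>rs\<in>{rs. length rs = p}. \<Sum>r\<in>UNIV. ?P (Suc p) c (ks @ [i]) (rs @ [r]) * lift_id p (?P p b) (rs @ [r]) (ls @ [j]))"
        by (simp only: sum_snoc sig)
      also have "\<dots> = (\<Sum>rs\<in>{rs. length rs = p}. ?P p (chi psi m i j c) ks rs * ?P p b rs ls)"
        using True by (intro sum.cong refl) (simp add: lift_id_def chi slice_def sum2)
      also have "\<dots> = ?P p (chi psi m i j c * b) ks ls"
        using True by (simp add: pp_mult[OF iso])
      finally show ?thesis .
    next
      case False then show ?thesis by (simp add: pp_zero)
    qed
  qed
  show ?thesis using pp_inj[OF iso A] pp_inj[OF iso B] by blast
qed

end
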